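(* Let $\mathbb{D}$ be a division ring, let $2\le m,n<\infty$, let $P$ be an $n\times m$ matrix over $\mathbb{D}$ with $\operatorname{rank}P = r$, and let $\mathcal{A}=\mathfrak{M}(\mathbb{D}, m, n, P)$. Then: (1) if $r\ge 1$, then $\mathcal{A}$ is generated by its idempotents as a $\mathbb{D}$-algebra; (2) if $r\ge 2$, then $\mathcal{A}$ is generated by its idempotents as a ring; (3) if $r\ge 2$ and $\operatorname{char}\mathbb{D}\ne 2$, then $\mathcal{A}$ is additively spanned by Jordan products of idempotents, i.e. $\mathcal{A}$ equals the additive subgroup generated by all elements $e\circ f = e\bullet f + f\bullet e$ with $e,f\in\mathcal{A}$ idempotents.
   Context: $\mathfrak{M}(\mathbb{D}, m, n, P)$ denotes the set of all $m\times n$ matrices over the division ring $\mathbb{D}$, with entrywise addition, multiplication $A\bullet B = APB$, and (left) scalar multiplication by elements of $\mathbb{D}$ entrywise. An element $e$ is an idempotent if $e\bullet e = e$. *)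

theory Defs
  imports "HOL-Analysis.Analysis"
begin

text \<open>Matrices over a division ring 'a: an m x n matrix is an element of 'a^'n^'m
 (rows indexed by 'm, columns by 'n).  The sandwich product A \<bullet> B = A P B
 for P an n x m matrix.\<close>

definition sandwich_mult :: "('a::division_ring)^'m^'n \<Rightarrow> 'a^'n^'m \<Rightarrow> 'a^'n^'m \<Rightarrow> 'a^'n^'m" where
  "sandwich_mult P A B = A ** P ** B"

definition lsmult :: "'a::division_ring \<Rightarrow> 'a^'n^'m \<Rightarrow> 'a^'n^'m" where
  "lsmult c A = (\<chi> i j. c * A $ i $ j)"

definition sandwich_idempotent :: "('a::division_ring)^'m^'n \<Rightarrow> 'a^'n^'m \<Rightarrow> bool" where
  "sandwich_idempotent P e \<longleftrightarrow> sandwich_mult P e e = e"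

definition idempotents :: "('a::division_ring)^'m^'n \<Rightarrow> ('a^'n^'m) set" where
  "idempotents P = {e. sandwich_idempotent P e}"

definition left_indep_rows :: "('a::division_ring)^'c^'r \<Rightarrow> 'r set \<Rightarrow> bool" where
  "left_indep_rows M I \<longleftrightarrow>
     (\<forall>c::'r \<Rightarrow> 'a. (\<forall>j. (\<Sum>i\<in>I. c i * M $ i $ j) = 0) \<longrightarrow> (\<forall>i\<in>I. c i = 0))"

definition mat_rank :: "('a::division_ring)^'c^'r \<Rightarrow> nat" where
  "mat_rank M = Max (card ` {I :: 'r set. left_indep_rows M I})"

inductive_set alg_generated :: "('a::division_ring)^'m^'n \<Rightarrow> ('a^'n^'m) set \<Rightarrow> ('a^'n^'m) set"
  for P S where
  base: "x \<in> S \<Longrightarrow> x \<in> alg_generated P S"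
| zero: "0 \<in> alg_generated P S"
| add: "x \<in> alg_generated P S \<Longrightarrow> y \<in> alg_generated P S \<Longrightarrow> x + y \<in> alg_generated P S"
| smult: "x \<in> alg_generated P S \<Longrightarrow> lsmult c x \<in> alg_generated P S"
| mult: "x \<in> alg_generated P S \<Longrightarrow> y \<in> alg_generated P S \<Longrightarrow> sandwich_mult P x y \<in> alg_generated P S"

inductive_set ring_generated :: "('a::division_ring)^'m^'n \<Rightarrow> ('a^'n^'m) set \<Rightarrow> ('a^'n^'m) set"
  for P S where
  base: "x \<in> S \<Longrightarrow> x \<in> ring_generated P S"
| zero: "0 \<in> ring_generated P S"
| add: "x \<in> ring_generated P S \<Longrightarrow> y \<in> ring_generated P S \<Longrightarrow> x + y \<in> ring_generated P S"
| neg: "x \<in> ring_generated P S \<Longrightarrow> - x \<in> ring_generated P S"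
| mult: "x \<in> ring_generated P S \<Longrightarrow> y \<in> ring_generated P S \<Longrightarrow> sandwich_mult P x y \<in> ring_generated P S"

inductive_set add_generated :: "('b::ab_group_add) set \<Rightarrow> 'b set" for S where
  base: "x \<in> S \<Longrightarrow> x \<in> add_generated S"
| zero: "0 \<in> add_generated S"
| add: "x \<in> add_generated S \<Longrightarrow> y \<in> add_generated S \<Longrightarrow> x + y \<in> add_generated S"
| neg: "x \<in> add_generated S \<Longrightarrow> - x \<in> add_generated S"

definition jordan_prod :: "('a::division_ring)^'m^'n \<Rightarrow> 'a^'n^'m \<Rightarrow> 'a^'n^'m \<Rightarrow> 'a^'n^'m" where
  "jordan_prod P e f = sandwich_mult P e f + sandwich_mult P f e"

end

theory Submission
  imports Defs
begin

definition rk1 :: "('a::division_ring)^'m \<Rightarrow> 'a^'n \<Rightarrow> 'a^'n^'m" where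
  "rk1 u v = (\<chi> k l. u$k * v$l)"
definition phi :: "('a::division_ring)^'m^'n \<Rightarrow> 'a^'n \<Rightarrow> 'a^'m \<Rightarrow> 'a" where
  "phi P v u = (\<Sum>x\<in>UNIV. \<Sum>y\<in>UNIV. v$x * P$x$y * u$y)"
lemma mult_rk1:
  fixes P :: "('a::division_ring)^'m::finite^'n::finite"
  shows "sandwich_mult P (rk1 u v) (rk1 u' v') = rk1 u (phi P v u' *s v')"
proof -
  have "\<And>k l. (\<Sum>y\<in>UNIV. (\<Sum>x\<in>UNIV. u$k * v$x * P$x$y) * (u'$y * v'$l))
      = u$k * ((\<Sum>x\<in>UNIV. \<Sum>y\<in>UNIV. v$x * P$x$y * u'$y) * v'$l)"
  proof -
    fix k l
    have "(\<Sum>y\<in>UNIV. (\<Sum>x\<in>UNIV. u$k * v$x * P$x$y) * (u'$y * v'$l))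
       = (\<Sum>y\<in>UNIV. \<Sum>x\<in>UNIV. u$k * (v$x * P$x$y * u'$y * v'$l))"
      by (simp add: sum_distrib_right mult.assoc)
    also have "\<dots> = (\<Sum>x\<in>UNIV. \<Sum>y\<in>UNIV. u$k * (v$x * P$x$y * u'$y * v'$l))"
      by (rule sum.swap)
    also have "\<dots> = u$k * ((\<Sum>x\<in>UNIV. \<Sum>y\<in>UNIV. v$x * P$x$y * u'$y) * v'$l)"
      by (simp add: sum_distrib_left sum_distrib_right)
    finally show "?thesis k l" .
  qed
  then show ?thesis
    unfolding sandwich_mult_def matrix_matrix_mult_def rk1_def phi_def vector_scalar_mult_def
    by (simp add: vec_eq_iff)
qed


definition uvec :: "'n \<Rightarrow> 'a::zero \<Rightarrow> 'a^'n" where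
  "uvec k a = (\<chi> i. if i = k then a else 0)"

definition rsc :: "('a::times)^'n \<Rightarrow> 'a \<Rightarrow> 'a^'n" where
  "rsc u c = (\<chi> i. u$i * c)"

lemma rk1_add1: "rk1 (u1 + u2) v = rk1 u1 v + rk1 u2 v"
  by (simp add: rk1_def vec_eq_iff distrib_right)
lemma rk1_add2: "rk1 u (v1 + v2) = rk1 u v1 + rk1 u v2"
  by (simp add: rk1_def vec_eq_iff distrib_left)
lemma rk1_diff1: "rk1 (u1 - u2) v = rk1 u1 v - rk1 u2 v"
  by (simp add: rk1_def vec_eq_iff left_diff_distrib)
lemma rk1_diff2: "rk1 u (v1 - v2) = rk1 u v1 - rk1 u v2"
  by (simp add: rk1_def vec_eq_iff right_diff_distrib)
lemma rk1_rsc: "rk1 (rsc u c) v = rk1 u (c *s v)"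
  by (simp add: rk1_def rsc_def vector_scalar_mult_def vec_eq_iff mult.assoc)
lemma rk1_uvec: "rk1 (uvec j c) v = rk1 (uvec j 1) (c *s v)"
  by (simp add: rk1_def uvec_def vector_scalar_mult_def vec_eq_iff)
lemma lsmult_rk1: "lsmult c (rk1 (uvec j 1) v) = rk1 (uvec j 1) (c *s v)"
  by (simp add: lsmult_def rk1_def uvec_def vector_scalar_mult_def vec_eq_iff)
lemma lsmult_m1: "lsmult (-1) x = - (x::('a::division_ring)^'n^'m)"
  by (simp add: lsmult_def vec_eq_iff)
lemma scale_scale: "a *s (b *s v) = (a * b) *s (v::('a::division_ring)^'n)"
  by (simp add: vector_scalar_mult_def vec_eq_iff mult.assoc)

lemma phi_add1: "phi P (v1 + v2) u = phi P v1 u + phi P v2 u"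
  by (simp add: phi_def distrib_right sum.distrib)
lemma phi_add2: "phi P v (u1 + u2) = phi P v u1 + phi P v u2"
  by (simp add: phi_def distrib_left sum.distrib)
lemma phi_diff1: "phi P (v1 - v2) u = phi P v1 u - phi P v2 u"
  by (simp add: phi_def left_diff_distrib sum_subtractf)
lemma phi_diff2: "phi P v (u1 - u2) = phi P v u1 - phi P v u2"
  by (simp add: phi_def right_diff_distrib sum_subtractf)
lemma phi_sc1: "phi P (c *s v) u = c * phi P v u"
  by (simp add: phi_def vector_scalar_mult_def sum_distrib_left mult.assoc)
lemma phi_sc2: "phi P v (rsc u c) = phi P v u * c"
  by (simp add: phi_def rsc_def sum_distrib_right mult.assoc)
lemma phi_uvec: "phi P (uvec i a) (uvec j b) = a * P$i$j * (b::'a::division_ring)"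
proof -
  have "phi P (uvec i a) (uvec j b) = (\<Sum>x\<in>UNIV. \<Sum>y\<in>UNIV. (if x = i then (if y = j then a * P$x$y * b else 0) else 0))"
    unfolding phi_def uvec_def by (intro sum.cong refl) auto
  also have "\<dots> = (\<Sum>x\<in>UNIV. if x = i then (\<Sum>y\<in>UNIV. if y = j then a * P$x$y * b else 0) else 0)"
    by (intro sum.cong refl) auto
  also have "\<dots> = a * P$i$j * b" by (simp only: sum.delta finite UNIV_I if_True)
  finally show ?thesis .
qed
lemma uvec_rsc: "uvec j c = rsc (uvec j 1) (c::'a::division_ring)"
  by (simp add: uvec_def rsc_def vec_eq_iff)


lemma idem_rk1:
  fixes P :: "('a::division_ring)^'m::finite^'n::finite"
  assumes "phi P v u = 1" shows "rk1 u v \<in> idempotents P"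
  using assms by (simp add: idempotents_def sandwich_idempotent_def mult_rk1 vector_scalar_mult_def)

lemma sum_closed:
  assumes "finite S" "\<And>x y. x\<in>G \<Longrightarrow> y\<in>G \<Longrightarrow> x+y \<in> G" "0 \<in> G" "\<And>x. x \<in> S \<Longrightarrow> f x \<in> G"
  shows "sum f S \<in> G"
  using assms by (induction S rule: finite_induct) auto

lemma matrix_decomp:
  fixes X :: "('a::division_ring)^'n::finite^'m::finite"
  shows "X = (\<Sum>k\<in>UNIV. \<Sum>l\<in>UNIV. rk1 (uvec k (X$k$l)) (uvec l 1))"
proof -
  have "(\<Sum>k\<in>UNIV. \<Sum>l\<in>UNIV. rk1 (uvec k (X$k$l)) (uvec l 1)) $ i $ j = X$i$j" for i j
  proof -
    have "(\<Sum>k\<in>UNIV. \<Sum>l\<in>UNIV. rk1 (uvec k (X$k$l)) (uvec l 1)) $ i $ j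
        = (\<Sum>k\<in>UNIV. \<Sum>l\<in>UNIV. (if i = k then X$k$l else 0) * (if j = l then 1 else 0))"
      by (simp only: sum_component rk1_def uvec_def vec_lambda_beta)
    also have "\<dots> = (\<Sum>k\<in>UNIV. \<Sum>l\<in>UNIV. if k = i then (if l = j then X$k$l else 0) else 0)"
      by (intro sum.cong refl) auto
    also have "\<dots> = (\<Sum>k\<in>UNIV. if k = i then (\<Sum>l\<in>UNIV. if l = j then X$k$l else 0) else 0)"
      by (intro sum.cong refl) auto
    also have "\<dots> = X$i$j" by (simp only: sum.delta finite UNIV_I if_True)
    finally show ?thesis .
  qed
  then show ?thesis by (simp add: vec_eq_iff)
qed


lemma gen_all:
  fixes P :: "('a::division_ring)^'m::finite^'n::finite" and G :: "('a^'n^'m) set"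
  assumes add: "\<And>x y. x\<in>G \<Longrightarrow> y\<in>G \<Longrightarrow> x+y \<in> G" and z: "0\<in>G"
  and wn: "phi P w (uvec j0 1) = 1"
  and A: "\<And>u. phi P w u = 0 \<Longrightarrow> rk1 u w \<in> G"
  and B: "\<And>v. phi P v (uvec j0 1) = 0 \<Longrightarrow> rk1 (uvec j0 1) v \<in> G"
  and C: "\<And>u v. phi P w u = 0 \<Longrightarrow> phi P v (uvec j0 1) = 0 \<Longrightarrow> rk1 u v \<in> G"
  and D: "\<And>c. rk1 (uvec j0 1) (c *s w) \<in> G"
  shows "G = UNIV"
proof -
  have R: "rk1 u v \<in> G" for u v
  proof -
    define \<alpha> where "\<alpha> = phi P w u"
    define \<beta> where "\<beta> = phi P v (uvec j0 1)"
    define u' where "u' = u - uvec j0 \<alpha>"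
    define v' where "v' = v - \<beta> *s w"
    have pu: "phi P w u' = 0"
      unfolding u'_def phi_diff2 uvec_rsc[of j0 \<alpha>] phi_sc2 wn by (simp add: \<alpha>_def)
    have pv: "phi P v' (uvec j0 1) = 0"
      unfolding v'_def phi_diff1 by (simp add: phi_sc1 wn \<beta>_def)
    have eq: "rk1 u v = rk1 u' v' + rk1 (rsc u' \<beta>) w + rk1 (uvec j0 1) (\<alpha> *s v')
        + rk1 (uvec j0 1) ((\<alpha> * \<beta>) *s w)"
    proof -
      have "u = u' + uvec j0 \<alpha>" "v = v' + \<beta> *s w" by (simp_all add: u'_def v'_def)
      then have "rk1 u v = rk1 (u' + uvec j0 \<alpha>) (v' + \<beta> *s w)" by simp
      also have "\<dots> = rk1 u' v' + rk1 u' (\<beta> *s w) + (rk1 (uvec j0 \<alpha>) v' + rk1 (uvec j0 \<alpha>) (\<beta> *s w))"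
        by (simp add: rk1_add1 rk1_add2)
      finally show ?thesis
        by (simp add: rk1_rsc rk1_uvec[of j0 \<alpha>] scale_scale add.assoc)
    qed
    have 1: "rk1 u' v' \<in> G" using C pu pv by blast
    have 2: "rk1 (rsc u' \<beta>) w \<in> G" using A by (simp add: phi_sc2 pu)
    have 3: "rk1 (uvec j0 1) (\<alpha> *s v') \<in> G" using B by (simp add: phi_sc1 pv)
    show ?thesis unfolding eq by (rule add[OF add[OF add[OF 1 2] 3] D])
  qed
  show ?thesis
  proof (intro set_eqI iffI)
    fix X :: "'a^'n^'m"
    show "X \<in> G"
      by (subst matrix_decomp) (intro sum_closed add z R; simp)
  qed simp
qed


lemma one_scale: "1 *s v = (v::('a::division_ring)^'n)"
  by (simp add: vector_scalar_mult_def vec_eq_iff)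
lemma scale_addl: "(a + b) *s v = a *s v + b *s (v::('a::division_ring)^'n)"
  by (simp add: vector_scalar_mult_def vec_eq_iff distrib_right)
lemma scale_addr: "c *s (v1 + v2) = c *s v1 + c *s (v2::('a::division_ring)^'n)"
  by (simp add: vector_scalar_mult_def vec_eq_iff distrib_left)

lemma rank_ge:
  fixes P :: "('a::division_ring)^'c::finite^'r::finite"
  assumes "mat_rank P \<ge> k" shows "\<exists>I. left_indep_rows P I \<and> card I \<ge> k"
proof -
  let ?S = "card ` {I. left_indep_rows P I}"
  have fin: "finite ?S" by simp
  have "{} \<in> {I. left_indep_rows P I}" by (simp add: left_indep_rows_def)
  then have ne: "?S \<noteq> {}" by blast
  have "Max ?S \<in> ?S" using Max_in[OF fin ne] .
  then show ?thesis using assms unfolding mat_rank_def by auto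
qed

lemma indep_row0:
  fixes P :: "('a::division_ring)^'c::finite^'r::finite"
  assumes ind: "left_indep_rows P I" and i1: "i1 \<in> I"
  shows "\<exists>j. P$i1$j \<noteq> 0"
proof -
  define c where "c = (\<lambda>x. if x = i1 then (1::'a) else 0)"
  have "(\<Sum>x\<in>I. c x * P$x$j) = P$i1$j" for j
    using i1 by (simp add: c_def if_distrib if_distribR cong: if_cong)
  moreover show "\<exists>j. P$i1$j \<noteq> 0"
  proof (rule ccontr)
    assume "\<not> ?thesis"
    then have "\<forall>j. (\<Sum>x\<in>I. c x * P$x$j) = 0" using calculation by simp
    then have "c i1 = 0" using ind i1 unfolding left_indep_rows_def by blast
    then show False by (simp add: c_def)
  qed
qed

lemma indep_row:
  fixes P :: "('a::division_ring)^'c::finite^'r::finite"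
  assumes ind: "left_indep_rows P I" and i0: "i0 \<in> I" and i1: "i1 \<in> I" and False: "i0 \<noteq> i1"
  shows "\<exists>j. P$i1$j - a * P$i0$j \<noteq> 0"
proof -
  define c where "c = (\<lambda>x. if x = i1 then (1::'a) else if x = i0 then - a else 0)"
  have sum_eq: "(\<Sum>x\<in>I. c x * P$x$j) = P$i1$j - a * P$i0$j" for j
  proof -
    have "(\<Sum>x\<in>I. c x * P$x$j) = (\<Sum>x\<in>{i0,i1}. c x * P$x$j)"
      by (rule sum.mono_neutral_right) (use i0 i1 in \<open>auto simp: c_def\<close>)
    also have "\<dots> = P$i1$j - a * P$i0$j" using False by (simp add: c_def)
    finally show ?thesis .
  qed
  show ?thesis
  proof (rule ccontr)
    assume "\<not> ?thesis"
    then have "\<forall>j. (\<Sum>x\<in>I. c x * P$x$j) = 0" using sum_eq by simp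
    then have "c i1 = 0" using ind i1 unfolding left_indep_rows_def by blast
    then show False by (simp add: c_def)
  qed
qed

lemma rank1_entry:
  fixes P :: "('a::division_ring)^'c::finite^'r::finite"
  assumes "mat_rank P \<ge> 1" shows "\<exists>i j. P$i$j \<noteq> 0"
proof -
  obtain I where I: "left_indep_rows P I" "card I \<ge> 1" using rank_ge[OF assms] by blast
  then obtain i where "i \<in> I" by fastforce
  from indep_row0[OF I(1) this] show ?thesis by auto
qed

lemma rank2_entry:
  fixes P :: "('a::division_ring)^'c::finite^'r::finite"
  assumes "mat_rank P \<ge> 2"
  shows "\<exists>i0 i1 j0 j1. P$i0$j0 \<noteq> 0 \<and> P$i1$j1 - P$i1$j0 * inverse (P$i0$j0) * P$i0$j1 \<noteq> 0"
proof -
  obtain I where I: "left_indep_rows P I" "card I \<ge> 2" using rank_ge[OF assms] by blast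
  then obtain i0 i1 where ii: "i0 \<in> I" "i1 \<in> I" "i0 \<noteq> i1"
  proof -
    have "I \<noteq> {}" using I(2) by auto
    then obtain i0 where i0: "i0 \<in> I" by blast
    have "card (I - {i0}) \<ge> 1" using I(2) i0 by (simp add: card_Diff_singleton)
    then have "I - {i0} \<noteq> {}" by (metis card.empty not_one_le_zero)
    then obtain i1 where "i1 \<in> I - {i0}" by blast
    then show ?thesis using that i0 by blast
  qed
  obtain j0 where j0: "P$i0$j0 \<noteq> 0" using indep_row0[OF I(1) ii(1)] by auto
  obtain j1 where "P$i1$j1 - (P$i1$j0 * inverse (P$i0$j0)) * P$i0$j1 \<noteq> 0"
    using indep_row[OF I(1) ii(1) ii(2) ii(3)] by blast
  then show ?thesis using j0 by (auto simp: mult.assoc)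
qed


lemma ring_like:
  fixes P :: "('a::division_ring)^'m::finite^'n::finite" and G :: "('a^'n^'m) set"
  assumes idem: "\<And>x. x \<in> idempotents P \<Longrightarrow> x \<in> G"
  and add: "\<And>x y. x\<in>G \<Longrightarrow> y\<in>G \<Longrightarrow> x+y \<in> G"
  and neg: "\<And>x. x\<in>G \<Longrightarrow> -x \<in> G"
  and mult: "\<And>x y. x\<in>G \<Longrightarrow> y\<in>G \<Longrightarrow> sandwich_mult P x y \<in> G"
  and wn: "phi P w (uvec j0 1) = 1"
  shows "phi P w u = 0 \<Longrightarrow> rk1 u w \<in> G"
    and "phi P v (uvec j0 1) = 0 \<Longrightarrow> rk1 (uvec j0 1) v \<in> G"
    and "phi P w u = 0 \<Longrightarrow> phi P v (uvec j0 1) = 0 \<Longrightarrow> rk1 u v \<in> G"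
proof -
  have e: "rk1 (uvec j0 1) w \<in> G" by (rule idem, rule idem_rk1) (simp add: wn)
  have A: "rk1 u w \<in> G" if h: "phi P w u = 0" for u
  proof -
    have f: "rk1 (uvec j0 1 + u) w \<in> G" by (rule idem, rule idem_rk1) (simp add: phi_add2 wn h)
    have "rk1 u w = rk1 (uvec j0 1 + u) w + - rk1 (uvec j0 1) w" by (simp add: rk1_add1)
    then show ?thesis using add[OF f neg[OF e]] by simp
  qed
  have B: "rk1 (uvec j0 1) v \<in> G" if h: "phi P v (uvec j0 1) = 0" for v
  proof -
    have f: "rk1 (uvec j0 1) (w + v) \<in> G" by (rule idem, rule idem_rk1) (simp add: phi_add1 wn h)
    have "rk1 (uvec j0 1) v = rk1 (uvec j0 1) (w + v) + - rk1 (uvec j0 1) w" by (simp add: rk1_add2)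
    then show ?thesis using add[OF f neg[OF e]] by simp
  qed
  show "phi P w u = 0 \<Longrightarrow> rk1 u w \<in> G" using A by blast
  show "phi P v (uvec j0 1) = 0 \<Longrightarrow> rk1 (uvec j0 1) v \<in> G" using B by blast
  assume h1: "phi P w u = 0" and h2: "phi P v (uvec j0 1) = 0"
  have "rk1 u v = sandwich_mult P (rk1 u w) (rk1 (uvec j0 1) v)"
    by (simp add: mult_rk1 wn one_scale)
  then show "rk1 u v \<in> G" using mult A[OF h1] B[OF h2] by simp
qed

lemma setup1:
  fixes P :: "('a::division_ring)^'m::finite^'n::finite"
  assumes "P$i0$j0 \<noteq> 0"
  shows "phi P (uvec i0 (inverse (P$i0$j0))) (uvec j0 1) = 1"
  using assms by (simp add: phi_uvec)

lemma setup2: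
  fixes P :: "('a::division_ring)^'m::finite^'n::finite"
  assumes p: "P$i0$j0 \<noteq> 0" and s: "P$i1$j1 - P$i1$j0 * inverse (P$i0$j0) * P$i0$j1 \<noteq> 0"
  defines "w \<equiv> uvec i0 (inverse (P$i0$j0))"
  shows "\<exists>u1 v1. phi P w u1 = 0 \<and> phi P v1 (uvec j0 1) = 0 \<and> phi P v1 u1 \<noteq> 0"
proof -
  define p where "p = P$i0$j0"
  define u1 where "u1 = uvec j1 1 - uvec j0 (inverse p * P$i0$j1)"
  define v1 where "v1 = uvec i1 1 - uvec i0 (P$i1$j0 * inverse p)"
  have pp: "p \<noteq> 0" using p by (simp add: p_def)
  have 1: "phi P w u1 = 0"
    unfolding u1_def w_def phi_diff2 phi_uvec p_def[symmetric]
    using pp by (simp add: mult.assoc[symmetric])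
  have 2: "phi P v1 (uvec j0 1) = 0"
    unfolding v1_def phi_diff1 phi_uvec p_def[symmetric]
    using pp by (simp add: mult.assoc)
  have 3: "phi P v1 u1 = P$i1$j1 - P$i1$j0 * inverse p * P$i0$j1"
    unfolding v1_def u1_def phi_diff1 phi_diff2 phi_uvec p_def[symmetric]
    using pp by (simp add: mult.assoc algebra_simps)
  show ?thesis
    apply (rule exI[of _ u1], rule exI[of _ v1])
    using 1 2 3 s unfolding p_def by simp
qed


lemma alg_part:
  fixes P :: "('a::division_ring)^'m::finite^'n::finite"
  assumes "mat_rank P \<ge> 1"
  shows "alg_generated P (idempotents P) = UNIV"
proof -
  obtain i0 j0 where p: "P$i0$j0 \<noteq> 0" using rank1_entry[OF assms] by blast
  define w where "w = uvec i0 (inverse (P$i0$j0))"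
  have wn: "phi P w (uvec j0 1) = 1" unfolding w_def using setup1[OF p] .
  let ?G = "alg_generated P (idempotents P)"
  have idem: "x \<in> ?G" if "x \<in> idempotents P" for x using that by (rule alg_generated.base)
  have add: "x + y \<in> ?G" if "x \<in> ?G" "y \<in> ?G" for x y using that by (rule alg_generated.add)
  have neg: "- x \<in> ?G" if "x \<in> ?G" for x
    using alg_generated.smult[OF that, of "-1"] by (simp add: lsmult_m1)
  have mult: "sandwich_mult P x y \<in> ?G" if "x \<in> ?G" "y \<in> ?G" for x y
    using that by (rule alg_generated.mult)
  have RL1: "rk1 u w \<in> ?G" if "phi P w u = 0" for u
    by (rule ring_like(1)[of P ?G w j0 u, OF idem add neg mult wn that])
  have RL2: "rk1 (uvec j0 1) v \<in> ?G" if "phi P v (uvec j0 1) = 0" for v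
    by (rule ring_like(2)[of P ?G w j0 v, OF idem add neg mult wn that])
  have RL3: "rk1 u v \<in> ?G" if "phi P w u = 0" "phi P v (uvec j0 1) = 0" for u v
    by (rule ring_like(3)[of P ?G w j0 u v, OF idem add neg mult wn that])
  have D: "rk1 (uvec j0 1) (c *s w) \<in> ?G" for c
  proof -
    have "rk1 (uvec j0 1) w \<in> ?G" by (rule idem, rule idem_rk1, rule wn)
    from alg_generated.smult[OF this, of c] show ?thesis by (simp add: lsmult_rk1)
  qed
  show ?thesis
    by (rule gen_all[of ?G P w j0, OF add alg_generated.zero wn RL1 RL2 RL3 D])
qed

lemma ring_part:
  fixes P :: "('a::division_ring)^'m::finite^'n::finite"
  assumes "mat_rank P \<ge> 2"
  shows "ring_generated P (idempotents P) = UNIV"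
proof -
  obtain i0 i1 j0 j1 where p: "P$i0$j0 \<noteq> 0"
    and s: "P$i1$j1 - P$i1$j0 * inverse (P$i0$j0) * P$i0$j1 \<noteq> 0"
    using rank2_entry[OF assms] by blast
  define w where "w = uvec i0 (inverse (P$i0$j0))"
  have wn: "phi P w (uvec j0 1) = 1" unfolding w_def using setup1[OF p] .
  obtain u1 v1 where uv: "phi P w u1 = 0" "phi P v1 (uvec j0 1) = 0" "phi P v1 u1 \<noteq> 0"
    using setup2[OF p s] unfolding w_def by blast
  let ?G = "ring_generated P (idempotents P)"
  have idem: "x \<in> ?G" if "x \<in> idempotents P" for x using that by (rule ring_generated.base)
  have add: "x + y \<in> ?G" if "x \<in> ?G" "y \<in> ?G" for x y using that by (rule ring_generated.add)
  have neg: "- x \<in> ?G" if "x \<in> ?G" for x using that by (rule ring_generated.neg)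
  have mult: "sandwich_mult P x y \<in> ?G" if "x \<in> ?G" "y \<in> ?G" for x y
    using that by (rule ring_generated.mult)
  have RL1: "rk1 u w \<in> ?G" if "phi P w u = 0" for u
    by (rule ring_like(1)[of P ?G w j0 u, OF idem add neg mult wn that])
  have RL2: "rk1 (uvec j0 1) v \<in> ?G" if "phi P v (uvec j0 1) = 0" for v
    by (rule ring_like(2)[of P ?G w j0 v, OF idem add neg mult wn that])
  have RL3: "rk1 u v \<in> ?G" if "phi P w u = 0" "phi P v (uvec j0 1) = 0" for u v
    by (rule ring_like(3)[of P ?G w j0 u v, OF idem add neg mult wn that])
  have D: "rk1 (uvec j0 1) (c *s w) \<in> ?G" for c
  proof -
    define s' where "s' = phi P v1 u1"
    have s'0: "s' \<noteq> 0" using uv(3) by (simp add: s'_def)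
    have a: "rk1 (uvec j0 1) ((c * inverse s') *s v1) \<in> ?G"
      by (rule RL2) (simp add: phi_sc1 uv(2))
    have b: "rk1 u1 w \<in> ?G" by (rule RL1) (rule uv(1))
    have "sandwich_mult P (rk1 (uvec j0 1) ((c * inverse s') *s v1)) (rk1 u1 w) = rk1 (uvec j0 1) (c *s w)"
      using s'0 by (simp add: mult_rk1 phi_sc1 s'_def[symmetric] mult.assoc)
    then show ?thesis using mult[OF a b] by simp
  qed
  show ?thesis
    by (rule gen_all[of ?G P w j0, OF add ring_generated.zero wn RL1 RL2 RL3 D])
qed


lemma two_half: "inverse 2 * c + inverse 2 * c = (c::'a::division_ring)" if "(2::'a) \<noteq> 0"
proof -
  have h: "(2::'a) * inverse 2 = 1" by (rule right_inverse[OF that])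
  have "inverse 2 * c + inverse 2 * c = (inverse 2 + inverse 2) * c" by (rule distrib_right[symmetric])
  also have "\<dots> = (2 * inverse 2) * c" by (simp only: mult_2)
  also have "\<dots> = c" by (simp only: h mult_1_left)
  finally show ?thesis .
qed

lemma jordan_part:
  fixes P :: "('a::division_ring)^'m::finite^'n::finite"
  assumes "mat_rank P \<ge> 2" and two: "(2::'a) \<noteq> 0"
  shows "add_generated {jordan_prod P e f | e f. e \<in> idempotents P \<and> f \<in> idempotents P} = UNIV"
proof -
  obtain i0 i1 j0 j1 where p: "P$i0$j0 \<noteq> 0"
    and s: "P$i1$j1 - P$i1$j0 * inverse (P$i0$j0) * P$i0$j1 \<noteq> 0"
    using rank2_entry[OF assms(1)] by blast
  define w where "w = uvec i0 (inverse (P$i0$j0))"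
  have wn: "phi P w (uvec j0 1) = 1" unfolding w_def using setup1[OF p] .
  obtain u1 v1 where uv: "phi P w u1 = 0" "phi P v1 (uvec j0 1) = 0" "phi P v1 u1 \<noteq> 0"
    using setup2[OF p s] unfolding w_def by blast
  define e0 :: "'a^'m" where "e0 = uvec j0 1"
  define e where "e = rk1 e0 w"
  let ?J = "add_generated {jordan_prod P e f | e f. e \<in> idempotents P \<and> f \<in> idempotents P}"
  have jp: "jordan_prod P f g \<in> ?J" if "f \<in> idempotents P" "g \<in> idempotents P" for f g
    using that by (intro add_generated.base) blast
  have add: "x + y \<in> ?J" if "x \<in> ?J" "y \<in> ?J" for x y using that by (rule add_generated.add)
  have neg: "- x \<in> ?J" if "x \<in> ?J" for x using that by (rule add_generated.neg)
  have sub: "x - y \<in> ?J" if "x \<in> ?J" "y \<in> ?J" for x y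
    using add[OF that(1) neg[OF that(2)]] by simp
  have wn': "phi P w e0 = 1" using wn by (simp add: e0_def)
  have ei: "e \<in> idempotents P" unfolding e_def by (rule idem_rk1, rule wn')
  have ee: "jordan_prod P e e = e + e"
    by (simp add: jordan_prod_def e_def mult_rk1 wn' one_scale)
  have A: "rk1 u w \<in> ?J" if h: "phi P w u = 0" for u
  proof -
    define f where "f = rk1 (e0 + u) w"
    have fi: "f \<in> idempotents P" unfolding f_def by (rule idem_rk1) (simp add: phi_add2 wn' h)
    have "jordan_prod P e f = rk1 e0 w + rk1 (e0 + u) w"
      by (simp add: jordan_prod_def e_def f_def mult_rk1 wn' phi_add2 h one_scale)
    then have "jordan_prod P e f = e + (e + rk1 u w)" by (simp add: rk1_add1 e_def)
    then have "rk1 u w = jordan_prod P e f - jordan_prod P e e" using ee by simp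
    then show ?thesis using sub[OF jp[OF ei fi] jp[OF ei ei]] by simp
  qed
  have B: "rk1 e0 v \<in> ?J" if h: "phi P v e0 = 0" for v
  proof -
    define g where "g = rk1 e0 (w + v)"
    have gi: "g \<in> idempotents P" unfolding g_def by (rule idem_rk1) (simp add: phi_add1 wn' h)
    have "jordan_prod P e g = rk1 e0 (w + v) + rk1 e0 w"
      by (simp add: jordan_prod_def e_def g_def mult_rk1 wn' phi_add1 h one_scale)
    then have "jordan_prod P e g = (e + rk1 e0 v) + e" by (simp add: rk1_add2 e_def)
    then have "rk1 e0 v = jordan_prod P e g - jordan_prod P e e" using ee by simp
    then show ?thesis using sub[OF jp[OF ei gi] jp[OF ei ei]] by simp
  qed
  have D2: "rk1 e0 (c *s w) + rk1 e0 (c *s w) \<in> ?J" for c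
  proof -
    define s' where "s' = phi P v1 u1"
    have s'0: "s' \<noteq> 0" using uv(3) by (simp add: s'_def)
    define \<gamma> where "\<gamma> = (1 - c) * inverse s'"
    define u' where "u' = uvec j0 c + u1"
    define v' where "v' = w + \<gamma> *s v1"
    have pv1: "phi P v1 e0 = 0" using uv(2) by (simp add: e0_def)
    have c1: "phi P w u' = c"
      unfolding u'_def phi_add2 uvec_rsc[of j0 c] phi_sc2 e0_def[symmetric] wn' uv(1) by simp
    have c2: "phi P v' e0 = 1"
      unfolding v'_def phi_add1 phi_sc1 wn' pv1 by simp
    have c3: "phi P v' u' = 1"
    proof -
      have "phi P v' u' = c + \<gamma> * s'"
        unfolding v'_def u'_def phi_add1 phi_add2 phi_sc1 uvec_rsc[of j0 c] phi_sc2
          e0_def[symmetric] wn' uv(1) pv1 s'_def by simp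
      also have "\<dots> = 1" using s'0 by (simp add: \<gamma>_def mult.assoc)
      finally show ?thesis .
    qed
    have hi: "rk1 u' v' \<in> idempotents P" by (rule idem_rk1, rule c3)
    have "jordan_prod P e (rk1 u' v') = rk1 e0 (c *s v') + rk1 u' w"
      by (simp add: jordan_prod_def e_def mult_rk1 c1 c2 one_scale)
    also have "\<dots> = (rk1 e0 (c *s w) + rk1 e0 (c *s w)) + (rk1 e0 ((c * \<gamma>) *s v1) + rk1 u1 w)"
      by (simp add: v'_def u'_def scale_addr scale_scale rk1_add1 rk1_add2 rk1_uvec[of j0 c] e0_def)
    finally have eq: "rk1 e0 (c *s w) + rk1 e0 (c *s w)
        = jordan_prod P e (rk1 u' v') - (rk1 e0 ((c * \<gamma>) *s v1) + rk1 u1 w)"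
      by (simp add: algebra_simps)
    have "rk1 e0 ((c * \<gamma>) *s v1) \<in> ?J" by (rule B) (simp add: phi_sc1 pv1)
    moreover have "rk1 u1 w \<in> ?J" by (rule A, rule uv(1))
    ultimately show ?thesis unfolding eq by (intro sub jp ei hi add)
  qed
  have D: "rk1 e0 (c *s w) \<in> ?J" for c
  proof -
    have "rk1 e0 ((inverse 2 * c) *s w) + rk1 e0 ((inverse 2 * c) *s w)
        = rk1 e0 ((inverse 2 * c) *s w + (inverse 2 * c) *s w)" by (rule rk1_add2[symmetric])
    also have "(inverse 2 * c) *s w + (inverse 2 * c) *s w = (inverse 2 * c + inverse 2 * c) *s w"
      by (rule scale_addl[symmetric])
    also have "inverse 2 * c + inverse 2 * c = c" by (rule two_half[OF two])
    finally have "rk1 e0 ((inverse 2 * c) *s w) + rk1 e0 ((inverse 2 * c) *s w) = rk1 e0 (c *s w)" .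
    then show ?thesis using D2[of "inverse 2 * c"] by (simp only:)
  qed
  have C: "rk1 u v \<in> ?J" if h1: "phi P w u = 0" and h2: "phi P v e0 = 0" for u v
  proof -
    define f where "f = rk1 (e0 + u) w"
    define g where "g = rk1 e0 (w + v)"
    have fi: "f \<in> idempotents P" unfolding f_def by (rule idem_rk1) (simp add: phi_add2 wn' h1)
    have gi: "g \<in> idempotents P" unfolding g_def by (rule idem_rk1) (simp add: phi_add1 wn' h2)
    have "sandwich_mult P f g = rk1 (e0 + u) (w + v)"
      by (simp add: f_def g_def mult_rk1 wn' one_scale)
    then have fg: "sandwich_mult P f g = e + rk1 e0 v + rk1 u w + rk1 u v"
      by (simp add: e_def rk1_add1 rk1_add2 algebra_simps)
    have "sandwich_mult P g f = rk1 e0 (phi P (w + v) (e0 + u) *s w)"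
      by (simp add: f_def g_def mult_rk1)
    also have "phi P (w + v) (e0 + u) = 1 + phi P v u"
      by (simp add: phi_add1 phi_add2 wn' h1 h2)
    finally have gf: "sandwich_mult P g f = e + rk1 e0 (phi P v u *s w)"
      by (simp add: e_def scale_addl one_scale rk1_add2)
    have eq: "rk1 u v = jordan_prod P f g - jordan_prod P e e - rk1 e0 v - rk1 u w - rk1 e0 (phi P v u *s w)"
      unfolding jordan_prod_def[of P f g] fg gf ee by (simp add: algebra_simps)
    have m1: "rk1 e0 v \<in> ?J" by (rule B, rule h2)
    have m2: "rk1 u w \<in> ?J" by (rule A, rule h1)
    have m3: "rk1 e0 (phi P v u *s w) \<in> ?J" by (rule D)
    show ?thesis unfolding eq by (intro sub jp fi gi ei m1 m2 m3)
  qed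
  show ?thesis
    by (rule gen_all[of ?J P w j0, OF add add_generated.zero wn A[unfolded e0_def] B[unfolded e0_def]
          C[unfolded e0_def] D[unfolded e0_def]])
qed


theorem theorem2p2:
  fixes P :: "('a::division_ring)^'m::finite^'n::finite"
  assumes "CARD('m) \<ge> 2" and "CARD('n) \<ge> 2"
  shows "(mat_rank P \<ge> 1 \<longrightarrow> alg_generated P (idempotents P) = UNIV)
       \<and> (mat_rank P \<ge> 2 \<longrightarrow> ring_generated P (idempotents P) = UNIV)
       \<and> (mat_rank P \<ge> 2 \<and> (2::'a) \<noteq> 0 \<longrightarrow>
            add_generated {jordan_prod P e f | e f. e \<in> idempotents P \<and> f \<in> idempotents P} = UNIV)"
  using alg_part[of P] ring_part[of P] jordan_part[of P] by blast

end
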